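(* Let $X$ be a Banach space and let $(C_n)_{n\in\mathbb N}$ be a nested (i.e. $C_{n+1}\subset C_n$) sequence of bounded, closed, convex subsets of $X$. Suppose that $K=\bigcap_n\overline{C_n}^{w^*}$ is metrizable in the weak* topology. Then: (1) every $g\in K$ is the weak*-limit of a sequence $(c_n)$ with $c_n\in C_n$ for each $n$; (2) every sequence $(c_n)$ with $c_n\in C_n$ for each $n$ admits a subsequence that is weak*-convergent in $X^{**}$.
   Context: $X$ is regarded as a subspace of $X^{**}$ via the canonical embedding, and $\overline{A}^{w^*}$ denotes the weak*-closure in $X^{**}$ of $A\subset X$. *)

theory Defs
  imports "HOL-Analysis.Analysis"
begin

type_synonym 'a bidual = "('a \<Rightarrow>\<^sub>L real) \<Rightarrow>\<^sub>L real"

definition canon :: "'a::real_normed_vector \<Rightarrow> 'a bidual" where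
  "canon x = Blinfun (\<lambda>f. blinfun_apply f x)"

text \<open>Weak* topology on X**: the coarsest topology making every evaluation
  phi |-> phi f (f in X*) continuous.\<close>
definition wstar :: "('a::real_normed_vector) bidual topology" where
  "wstar = pullback_topology UNIV (\<lambda>\<phi> f. blinfun_apply \<phi> f)
             (product_topology (\<lambda>_. euclideanreal) UNIV)"

definition wstar_closure :: "'a::real_normed_vector set \<Rightarrow> 'a bidual set" where
  "wstar_closure A = wstar closure_of (canon ` A)"

end

theory Submission
  imports Defs
begin

lemma canon_apply[simp]: "blinfun_apply (canon x) f = blinfun_apply f x"
  unfolding canon_def
  by (subst bounded_linear_Blinfun_apply)
     (auto intro: bounded_bilinear.bounded_linear_left[OF bounded_bilinear_blinfun_apply])

lemma wstar_eq: "wstar = pullback_topology UNIV blinfun_apply euclidean"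
  by (simp add: wstar_def euclidean_product_topology)

lemma topspace_wstar[simp]: "topspace wstar = UNIV"
  by (simp add: wstar_eq topspace_pullback_topology)

lemma openin_wstar: "openin wstar U \<longleftrightarrow> (\<exists>V. open V \<and> U = blinfun_apply -` V)"
  by (simp add: wstar_eq openin_pullback_topology)

lemma cont_eval: "continuous_map wstar euclideanreal (\<lambda>\<phi>. blinfun_apply \<phi> f)"
proof -
  have "continuous_map wstar euclideanreal ((\<lambda>h. h f) o blinfun_apply)"
    unfolding wstar_eq by (rule continuous_map_pullback) (use continuous_on_product_coordinates in fastforce)
  then show ?thesis by (simp add: comp_def)
qed

lemma limitin_wstar:
  "limitin wstar s g F \<longleftrightarrow> (\<forall>f. ((\<lambda>n. blinfun_apply (s n) f) \<longlongrightarrow> blinfun_apply g f) F)"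
proof -
  have "limitin wstar s g F \<longleftrightarrow> ((\<lambda>n. blinfun_apply (s n)) \<longlongrightarrow> blinfun_apply g) F"
    unfolding limitin_def tendsto_def openin_wstar by auto
  also have "\<dots> \<longleftrightarrow> limitin (product_topology (\<lambda>_. euclideanreal) UNIV) (\<lambda>n. blinfun_apply (s n)) (blinfun_apply g) F"
    by (simp add: euclidean_product_topology)
  also have "\<dots> \<longleftrightarrow> (\<forall>f. ((\<lambda>n. blinfun_apply (s n) f) \<longlongrightarrow> blinfun_apply g f) F)"
    by (subst limitin_componentwise) simp
  finally show ?thesis .
qed


lemma basic_open:
  assumes "finite F"
  shows "openin wstar {\<phi>. \<forall>f\<in>F. \<bar>blinfun_apply \<phi> f - a f\<bar> < e}"
proof -
  have "open {h::('a::real_normed_vector \<Rightarrow>\<^sub>L real) \<Rightarrow> real. \<forall>f\<in>F. h (id f) \<in> ball (a f) e}"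
    by (rule product_topology_basis') (use assms in auto)
  moreover have "{\<phi>. \<forall>f\<in>F. \<bar>blinfun_apply \<phi> f - a f\<bar> < e} = blinfun_apply -` {h. \<forall>f\<in>F. h (id f) \<in> ball (a f) e}"
    by (auto simp: dist_real_def abs_minus_commute)
  ultimately show ?thesis unfolding openin_wstar by blast
qed

lemma basic_closed:
  "closedin wstar {\<phi>. \<forall>f\<in>F. \<bar>blinfun_apply \<phi> f - a f\<bar> \<le> e}"
proof -
  have cm: "continuous_map wstar euclidean (blinfun_apply :: ('a::real_normed_vector) bidual \<Rightarrow> _)"
    unfolding wstar_eq using continuous_map_pullback[of euclidean euclidean id UNIV blinfun_apply] by simp
  have "closed (\<Inter>f\<in>F. {h::('a \<Rightarrow>\<^sub>L real) \<Rightarrow> real. \<bar>h f - a f\<bar> \<le> e})"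
  proof (rule closed_INT, rule ballI)
    fix f
    have "continuous_on UNIV (\<lambda>h::('a \<Rightarrow>\<^sub>L real) \<Rightarrow> real. h f)"
      by (rule continuous_on_product_coordinates)
    then show "closed {h::('a \<Rightarrow>\<^sub>L real) \<Rightarrow> real. \<bar>h f - a f\<bar> \<le> e}"
      by (intro closed_Collect_le continuous_intros) auto
  qed
  then have "closedin wstar {x \<in> topspace wstar. blinfun_apply x \<in> (\<Inter>f\<in>F. {h::('a \<Rightarrow>\<^sub>L real) \<Rightarrow> real. \<bar>h f - a f\<bar> \<le> e})}"
    by (intro closedin_continuous_map_preimage[OF cm]) auto
  moreover have "{x \<in> topspace wstar. blinfun_apply x \<in> (\<Inter>f\<in>F. {h::('a \<Rightarrow>\<^sub>L real) \<Rightarrow> real. \<bar>h f - a f\<bar> \<le> e})} = {\<phi>. \<forall>f\<in>F. \<bar>blinfun_apply \<phi> f - a f\<bar> \<le> e}"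
    by auto
  ultimately show ?thesis by simp
qed

lemma basic_nbhd:
  assumes "openin wstar U" "g \<in> U"
  shows "\<exists>F e. finite F \<and> e > 0 \<and> {\<phi>. \<forall>f\<in>F. \<bar>blinfun_apply \<phi> f - blinfun_apply g f\<bar> < e} \<subseteq> U"
proof -
  obtain V where V: "open V" "U = blinfun_apply -` V" using assms(1) openin_wstar by blast
  have "blinfun_apply g \<in> V" using V assms(2) by auto
  then obtain W where W: "finite {i \<in> UNIV. W i \<noteq> topspace euclideanreal}"
     "\<forall>i\<in>UNIV. openin euclideanreal (W i)" "blinfun_apply g \<in> Pi\<^sub>E UNIV W" "Pi\<^sub>E UNIV W \<subseteq> V"
    using V(1) unfolding open_fun_def openin_product_topology_alt by blast
  define F where "F = {i. W i \<noteq> UNIV}"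
  have fF: "finite F" using W(1) by (simp add: F_def)
  have "\<forall>i\<in>F. \<exists>r>0. ball (blinfun_apply g i) r \<subseteq> W i"
  proof
    fix i assume "i \<in> F"
    have "open (W i)" using W(2) by simp
    moreover have "blinfun_apply g i \<in> W i" using W(3) by (auto simp: PiE_def)
    ultimately show "\<exists>r>0. ball (blinfun_apply g i) r \<subseteq> W i" by (simp add: open_contains_ball)
  qed
  then obtain r where r: "\<forall>i\<in>F. r i > 0 \<and> ball (blinfun_apply g i) (r i) \<subseteq> W i"
    by metis
  define e where "e = Min (insert 1 (r ` F))"
  have epos: "e > 0" unfolding e_def using fF r by auto
  have ele: "e \<le> r i" if "i \<in> F" for i unfolding e_def using fF that by auto
  have "{\<phi>. \<forall>f\<in>F. \<bar>blinfun_apply \<phi> f - blinfun_apply g f\<bar> < e} \<subseteq> U"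
  proof
    fix \<phi> assume "\<phi> \<in> {\<phi>. \<forall>f\<in>F. \<bar>blinfun_apply \<phi> f - blinfun_apply g f\<bar> < e}"
    then have h: "\<forall>f\<in>F. \<bar>blinfun_apply \<phi> f - blinfun_apply g f\<bar> < e" by simp
    have "blinfun_apply \<phi> \<in> Pi\<^sub>E UNIV W"
    proof (simp add: PiE_def Pi_def, intro allI)
      fix i show "blinfun_apply \<phi> i \<in> W i"
      proof (cases "i \<in> F")
        case True
        then have "blinfun_apply \<phi> i \<in> ball (blinfun_apply g i) (r i)"
          using h ele[OF True] by (auto simp: dist_real_def)
        then show ?thesis using r True by blast
      next
        case False then show ?thesis by (simp add: F_def)
      qed
    qed
    then show "\<phi> \<in> U" using W(4) V(2) by blast
  qed
  then show ?thesis using fF epos by blast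
qed

lemma sep_family:
  assumes metr: "metrizable_space (subtopology wstar K)" and gK: "g \<in> K"
  shows "\<exists>F e. (\<forall>m::nat. finite (F m) \<and> e m > (0::real)) \<and>
     (\<forall>h\<in>K. (\<forall>m. \<forall>f\<in>F m. \<bar>blinfun_apply h f - blinfun_apply g f\<bar> \<le> e m) \<longrightarrow> h = g)"
proof -
  obtain M d where Md: "Metric_space M d" "subtopology wstar K = Metric_space.mtopology M d"
    using metr unfolding metrizable_space_def by blast
  interpret Metric_space M d by (rule Md(1))
  have MK: "M = K"
  proof -
    have "topspace (subtopology wstar K) = K" by simp
    then show ?thesis using Md(2) by simp
  qed
  have Uex: "\<forall>m. \<exists>U. openin wstar U \<and> mball g (1 / Suc m) = U \<inter> K"
  proof
    fix m
    have "openin (subtopology wstar K) (mball g (1 / Suc m))" using Md(2) by simp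
    then show "\<exists>U. openin wstar U \<and> mball g (1 / Suc m) = U \<inter> K"
      by (simp add: openin_subtopology)
  qed
  obtain U where U: "\<And>m. openin wstar (U m)" "\<And>m. mball g (1 / Suc m) = U m \<inter> K"
    using choice[OF Uex] by blast
  have gU: "g \<in> U m" for m using U(2)[of m] gK MK centre_in_mball_iff[of g "1/Suc m"] by auto
  have "\<forall>m. \<exists>Fe. finite (fst Fe) \<and> snd Fe > 0 \<and> {\<phi>. \<forall>f\<in>fst Fe. \<bar>blinfun_apply \<phi> f - blinfun_apply g f\<bar> < snd Fe} \<subseteq> U m"
  proof
    fix m
    obtain F0 e0 where "finite F0" "e0 > 0" "{\<phi>. \<forall>f\<in>F0. \<bar>blinfun_apply \<phi> f - blinfun_apply g f\<bar> < e0} \<subseteq> U m"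
      using basic_nbhd[OF U(1) gU] by blast
    then show "\<exists>Fe. finite (fst Fe) \<and> snd Fe > 0 \<and> {\<phi>. \<forall>f\<in>fst Fe. \<bar>blinfun_apply \<phi> f - blinfun_apply g f\<bar> < snd Fe} \<subseteq> U m"
      by (intro exI[of _ "(F0, e0)"]) simp
  qed
  then have "\<exists>FE. \<forall>m. finite (fst (FE m)) \<and> snd (FE m) > 0 \<and> {\<phi>. \<forall>f\<in>fst (FE m). \<bar>blinfun_apply \<phi> f - blinfun_apply g f\<bar> < snd (FE m)} \<subseteq> U m"
    by (rule choice)
  then obtain FE where FE: "\<forall>m. finite (fst (FE m)) \<and> snd (FE m) > 0 \<and> {\<phi>. \<forall>f\<in>fst (FE m). \<bar>blinfun_apply \<phi> f - blinfun_apply g f\<bar> < snd (FE m)} \<subseteq> U m"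
    by blast
  define F where "F m = fst (FE m)" for m
  define e where "e m = snd (FE m)" for m
  have Fe: "\<And>m. finite (F m)" "\<And>m. e m > 0"
    "\<And>m. {\<phi>. \<forall>f\<in>F m. \<bar>blinfun_apply \<phi> f - blinfun_apply g f\<bar> < e m} \<subseteq> U m"
    using FE unfolding F_def e_def by auto
  have "h = g" if hK: "h \<in> K" and hF: "\<forall>m. \<forall>f\<in>F m. \<bar>blinfun_apply h f - blinfun_apply g f\<bar> \<le> e m / 2" for h
  proof -
    have dlt: "d g h < 1 / Suc m" for m
    proof -
      have "\<forall>f\<in>F m. \<bar>blinfun_apply h f - blinfun_apply g f\<bar> < e m"
      proof
        fix f assume "f \<in> F m"
        then have "\<bar>blinfun_apply h f - blinfun_apply g f\<bar> \<le> e m / 2" using hF by blast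
        then show "\<bar>blinfun_apply h f - blinfun_apply g f\<bar> < e m" using Fe(2)[of m] by linarith
      qed
      then have "h \<in> U m" using Fe(3)[of m] by blast
      then have "h \<in> mball g (1 / Suc m)" using U(2) hK by blast
      then show ?thesis by simp
    qed
    have "\<not> d g h > 0"
    proof
      assume "d g h > 0"
      then obtain m where "1 / real (Suc m) < d g h" using nat_approx_posE by blast
      with dlt[of m] show False by simp
    qed
    then have "d g h = 0" using nonneg[of g h] by linarith
    then show ?thesis using hK gK MK by simp
  qed
  then have "(\<forall>m. finite (F m) \<and> e m / 2 > 0) \<and>
     (\<forall>h\<in>K. (\<forall>m. \<forall>f\<in>F m. \<bar>blinfun_apply h f - blinfun_apply g f\<bar> \<le> e m / 2) \<longrightarrow> h = g)"
    using Fe(1,2) by auto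
  note * = this
  show ?thesis
    apply (rule exI[where x=F])
    apply (rule exI[where x="\<lambda>m. e m / 2"])
    using * by simp
qed


lemma closed_fun_eq:
  fixes a b :: "('b \<Rightarrow> real) \<Rightarrow> real"
  assumes "continuous_on UNIV a" "continuous_on UNIV b"
  shows "closed {h. a h = b h}"
  using assms by (intro closed_Collect_eq) auto

lemma cluster:
  fixes s :: "nat \<Rightarrow> 'a::real_normed_vector"
  assumes bnd: "\<And>n. norm (s n) \<le> B" and inf: "infinite I"
  shows "\<exists>\<phi>. \<forall>N. \<phi> \<in> wstar closure_of (canon ` s ` {n\<in>I. N \<le> n})"
proof -
  define P :: "(('a \<Rightarrow>\<^sub>L real) \<Rightarrow> real) set" where "P = PiE UNIV (\<lambda>f. cball 0 (B * norm f))"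
  define A :: "nat \<Rightarrow> (('a \<Rightarrow>\<^sub>L real) \<Rightarrow> real) set" where "A N = (\<lambda>n. \<lambda>f. blinfun_apply f (s n)) ` {n\<in>I. N \<le> n}" for N
  have AP: "A N \<subseteq> P" for N
  proof
    fix y assume "y \<in> A N"
    then obtain n where y: "y = (\<lambda>f. blinfun_apply f (s n))" unfolding A_def by blast
    have "\<bar>blinfun_apply f (s n)\<bar> \<le> B * norm f" for f
    proof -
      have "\<bar>blinfun_apply f (s n)\<bar> \<le> norm f * norm (s n)" using norm_blinfun[of f "s n"] by simp
      also have "\<dots> \<le> norm f * B" by (rule mult_left_mono[OF bnd]) simp
      finally show ?thesis by (simp add: mult.commute)
    qed
    then show "y \<in> P" unfolding P_def y by (simp add: PiE_def Pi_def dist_real_def)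
  qed
  define X where "X = subtopology euclidean P"
  have Xeq: "X = product_topology (\<lambda>f. subtopology euclidean (cball 0 (B * norm f))) UNIV"
    unfolding X_def P_def
    using subtopology_product_topology[of "\<lambda>_. euclideanreal" UNIV "\<lambda>f. cball 0 (B * norm f)"]
    by (simp add: euclidean_product_topology)
  have "compact_space (product_topology (\<lambda>f. subtopology euclidean (cball (0::real) (B * norm f))) (UNIV :: ('a \<Rightarrow>\<^sub>L real) set))"
    unfolding compact_space_product_topology
    by (intro disjI2 ballI compact_space_subtopology) simp
  then have cs: "compact_space X" using Xeq by simp
  have topX: "topspace X = P" unfolding X_def by simp
  define C where "C N = X closure_of A N" for N
  have "(\<Inter>N. C N) \<noteq> {}"
  proof (rule compact_space_imp_nest[OF cs])
    show "closedin X (C N)" for N unfolding C_def by simp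
    show "C N \<noteq> {}" for N
    proof -
      obtain n where "n \<ge> N" "n \<in> I" using inf infinite_nat_iff_unbounded_le by blast
      then have "A N \<noteq> {}" unfolding A_def by blast
      moreover have "A N \<subseteq> C N" unfolding C_def using AP topX by (simp add: closure_of_subset)
      ultimately show ?thesis by blast
    qed
    show "decseq C" unfolding decseq_def C_def A_def
      by (intro allI impI closure_of_mono image_mono) auto
  qed
  then obtain q where q: "\<And>N. q \<in> C N" by blast
  have qP: "q \<in> P" using closure_of_subset_topspace[of X "A 0"] q[of 0] topX unfolding C_def by blast
  have qcl: "q \<in> closure (A N)" for N
    using q[of N] closure_of_subtopology_subset[of euclidean P "A N"] unfolding C_def X_def euclidean_closure_of by blast
  have add: "q (f + g) = q f + q g" for f g
  proof -
    have "closed {h::('a \<Rightarrow>\<^sub>L real) \<Rightarrow> real. h (f + g) = h f + h g}"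
      by (intro closed_Collect_eq continuous_intros) auto
    moreover have "A 0 \<subseteq> {h. h (f + g) = h f + h g}" unfolding A_def by (auto simp: blinfun.add_left)
    ultimately show ?thesis using qcl[of 0] closure_minimal by blast
  qed
  have scl: "q (c *\<^sub>R f) = c *\<^sub>R q f" for c f
  proof -
    have "closed {h::('a \<Rightarrow>\<^sub>L real) \<Rightarrow> real. h (c *\<^sub>R f) = c *\<^sub>R h f}"
      by (intro closed_Collect_eq continuous_intros) auto
    moreover have "A 0 \<subseteq> {h. h (c *\<^sub>R f) = c *\<^sub>R h f}" unfolding A_def by (auto simp: blinfun.scaleR_left)
    ultimately show ?thesis using qcl[of 0] closure_minimal by blast
  qed
  have nq: "norm (q f) \<le> norm f * B" for f
  proof -
    have "q f \<in> cball 0 (B * norm f)" using qP unfolding P_def by (simp add: PiE_def Pi_def)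
    then show ?thesis by (simp add: dist_real_def mult.commute)
  qed
  have bl: "bounded_linear q" by (rule bounded_linear_intro[OF add scl nq])
  define \<phi> where "\<phi> = Blinfun q"
  have phq: "blinfun_apply \<phi> = q" unfolding \<phi>_def using bl by (rule bounded_linear_Blinfun_apply)
  have "\<phi> \<in> wstar closure_of (canon ` s ` {n\<in>I. N \<le> n})" for N
  proof (unfold in_closure_of, intro conjI allI impI)
    show "\<phi> \<in> topspace wstar" by simp
    fix T assume T: "\<phi> \<in> T \<and> openin wstar T"
    then obtain V where V: "open V" "T = blinfun_apply -` V" using openin_wstar by blast
    have "q \<in> V" using T V phq by auto
    then have "A N \<inter> V \<noteq> {}" using qcl[of N] V(1) unfolding closure_iff_nhds_not_empty by blast
    then obtain n where n: "n \<in> I" "N \<le> n" "(\<lambda>f. blinfun_apply f (s n)) \<in> V" unfolding A_def by blast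
    have "blinfun_apply (canon (s n)) = (\<lambda>f. blinfun_apply f (s n))" by (rule ext) simp
    then have "canon (s n) \<in> T" using n(3) V(2) by simp
    moreover have "canon (s n) \<in> canon ` s ` {n\<in>I. N \<le> n}" using n by blast
    ultimately show "\<exists>y. y \<in> canon ` s ` {n\<in>I. N \<le> n} \<and> y \<in> T" by blast
  qed
  then show ?thesis by blast
qed


lemma cluster_in_K:
  assumes nestle: "\<And>m n. m \<le> n \<Longrightarrow> C n \<subseteq> C m"
    and s: "\<And>n. s n \<in> C n"
    and phi: "\<And>N. \<phi> \<in> wstar closure_of (canon ` s ` {n\<in>I. N \<le> n})"
  shows "\<phi> \<in> (\<Inter>n. wstar_closure (C n))"
proof -
  have "\<phi> \<in> wstar_closure (C N)" for N
  proof -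
    have "canon ` s ` {n\<in>I. N \<le> n} \<subseteq> canon ` C N" using s nestle by blast
    then show ?thesis using phi[of N] closure_of_mono unfolding wstar_closure_def by blast
  qed
  then show ?thesis by blast
qed

lemma conv_lemma:
  fixes C :: "nat \<Rightarrow> 'a::real_normed_vector set"
  assumes nestle: "\<And>m n. m \<le> n \<Longrightarrow> C n \<subseteq> C m"
    and bndC: "\<And>n x. x \<in> C n \<Longrightarrow> norm x \<le> B"
    and sep: "\<forall>h\<in>(\<Inter>n. wstar_closure (C n)). (\<forall>m. \<forall>f\<in>F m. \<bar>blinfun_apply h f - blinfun_apply g f\<bar> \<le> e m) \<longrightarrow> h = g"
    and s: "\<And>n. s n \<in> C n"
    and ev: "\<And>m::nat. \<exists>N. \<forall>n\<ge>N. \<forall>f\<in>F m. \<bar>blinfun_apply f (s n) - blinfun_apply g f\<bar> \<le> e m"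
  shows "limitin wstar (\<lambda>n. canon (s n)) g sequentially"
  unfolding limitin_wstar
proof
  fix f
  show "((\<lambda>n. blinfun_apply (canon (s n)) f) \<longlongrightarrow> blinfun_apply g f) sequentially"
  proof (rule ccontr)
    assume nc: "\<not> ((\<lambda>n. blinfun_apply (canon (s n)) f) \<longlongrightarrow> blinfun_apply g f) sequentially"
    then obtain \<epsilon> where \<epsilon>: "\<epsilon> > 0" "\<forall>N. \<exists>n\<ge>N. \<bar>blinfun_apply f (s n) - blinfun_apply g f\<bar> \<ge> \<epsilon>"
      unfolding LIMSEQ_def dist_real_def by (auto simp: not_less)
    define I where "I = {n. \<bar>blinfun_apply f (s n) - blinfun_apply g f\<bar> \<ge> \<epsilon>}"
    have "infinite I" unfolding I_def infinite_nat_iff_unbounded_le using \<epsilon>(2) by blast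
    then obtain \<phi> where phi: "\<And>N. \<phi> \<in> wstar closure_of (canon ` s ` {n\<in>I. N \<le> n})"
      using cluster[of s B I] bndC s by blast
    have \<phi>K: "\<phi> \<in> (\<Inter>n. wstar_closure (C n))" by (rule cluster_in_K[OF nestle s phi])
    have "\<forall>m. \<forall>f\<in>F m. \<bar>blinfun_apply \<phi> f - blinfun_apply g f\<bar> \<le> e m"
    proof (intro allI)
      fix m
      obtain N where N: "\<forall>n\<ge>N. \<forall>f\<in>F m. \<bar>blinfun_apply f (s n) - blinfun_apply g f\<bar> \<le> e m"
        using ev by blast
      have "canon ` s ` {n\<in>I. N \<le> n} \<subseteq> {\<psi>. \<forall>f\<in>F m. \<bar>blinfun_apply \<psi> f - blinfun_apply g f\<bar> \<le> e m}"
        using N by auto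
      then have "wstar closure_of (canon ` s ` {n\<in>I. N \<le> n}) \<subseteq> {\<psi>. \<forall>f\<in>F m. \<bar>blinfun_apply \<psi> f - blinfun_apply g f\<bar> \<le> e m}"
        by (rule closure_of_minimal[OF _ basic_closed])
      then show "\<forall>f\<in>F m. \<bar>blinfun_apply \<phi> f - blinfun_apply g f\<bar> \<le> e m" using phi[of N] by blast
    qed
    then have "\<phi> = g" using sep \<phi>K by blast
    moreover have "\<bar>blinfun_apply \<phi> f - blinfun_apply g f\<bar> \<ge> \<epsilon>"
    proof -
      have cl: "closedin wstar {x \<in> topspace wstar. blinfun_apply x f \<in> {y. \<bar>y - blinfun_apply g f\<bar> \<ge> \<epsilon>}}"
        by (rule closedin_continuous_map_preimage[OF cont_eval]) (simp add: closed_Collect_le continuous_intros)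
      have "canon ` s ` {n\<in>I. 0 \<le> n} \<subseteq> {x \<in> topspace wstar. blinfun_apply x f \<in> {y. \<bar>y - blinfun_apply g f\<bar> \<ge> \<epsilon>}}"
        unfolding I_def by auto
      from closure_of_minimal[OF this cl] phi[of 0] show ?thesis by blast
    qed
    ultimately show False using \<epsilon>(1) by simp
  qed
qed


theorem lemma1:
  fixes C :: "nat \<Rightarrow> 'a::banach set"
  assumes bdd: "\<And>n. bounded (C n)"
    and cl: "\<And>n. closed (C n)"
    and cvx: "\<And>n. convex (C n)"
    and nested: "\<And>n. C (Suc n) \<subseteq> C n"
    and metr: "metrizable_space (subtopology wstar (\<Inter>n. wstar_closure (C n)))"
  shows "(\<forall>g \<in> (\<Inter>n. wstar_closure (C n)). \<exists>c. (\<forall>n. c n \<in> C n) \<and>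
            limitin wstar (\<lambda>n. canon (c n)) g sequentially)
       \<and> (\<forall>c. (\<forall>n. c n \<in> C n) \<longrightarrow>
            (\<exists>r g. strict_mono r \<and> limitin wstar (\<lambda>n. canon (c (r n))) g sequentially))"
proof -
  define K where "K = (\<Inter>n. wstar_closure (C n))"
  have nestle: "\<And>m n. m \<le> n \<Longrightarrow> C n \<subseteq> C m"
    using nested by (rule lift_Suc_antimono_le)
  obtain B where B0: "\<forall>x\<in>C 0. norm x \<le> B" using bdd[of 0] bounded_iff by blast
  have bndC: "\<And>n x. x \<in> C n \<Longrightarrow> norm x \<le> B" using B0 nestle[of 0] by blast
  have nbhd: "\<exists>x\<in>C k. canon x \<in> (\<Inter>m\<in>{..n}. {\<psi>. \<forall>f\<in>F m. \<bar>blinfun_apply \<psi> f - blinfun_apply p f\<bar> < e m})"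
    if "\<And>m. finite (F m)" "\<And>m. e m > (0::real)" "p \<in> wstar closure_of (canon ` C k)" for F e p k and n :: nat
  proof -
    have "openin wstar (\<Inter>m\<in>{..n}. {\<psi>. \<forall>f\<in>F m. \<bar>blinfun_apply \<psi> f - blinfun_apply p f\<bar> < e m})"
      using that(1) by (intro openin_INT2 basic_open) auto
    moreover have "p \<in> (\<Inter>m\<in>{..n}. {\<psi>. \<forall>f\<in>F m. \<bar>blinfun_apply \<psi> f - blinfun_apply p f\<bar> < e m})"
      using that(2) by simp
    ultimately show ?thesis using that(3) unfolding in_closure_of by blast
  qed
  have part1: "\<exists>c. (\<forall>n. c n \<in> C n) \<and> limitin wstar (\<lambda>n. canon (c n)) g sequentially"
    if gK: "g \<in> K" for g
  proof -
    obtain F e where Fe: "\<forall>m::nat. finite (F m) \<and> e m > (0::real)"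
      "\<forall>h\<in>K. (\<forall>m. \<forall>f\<in>F m. \<bar>blinfun_apply h f - blinfun_apply g f\<bar> \<le> e m) \<longrightarrow> h = g"
      using sep_family[OF metr[folded K_def] gK] by blast
    have "\<forall>n. \<exists>x\<in>C n. canon x \<in> (\<Inter>m\<in>{..n}. {\<psi>. \<forall>f\<in>F m. \<bar>blinfun_apply \<psi> f - blinfun_apply g f\<bar> < e m})"
    proof
      fix n
      have "g \<in> wstar closure_of (canon ` C n)" using gK unfolding K_def wstar_closure_def by blast
      then show "\<exists>x\<in>C n. canon x \<in> (\<Inter>m\<in>{..n}. {\<psi>. \<forall>f\<in>F m. \<bar>blinfun_apply \<psi> f - blinfun_apply g f\<bar> < e m})"
        using nbhd[of F e g n n] Fe(1) by blast
    qed
    then have "\<forall>n. \<exists>x. x \<in> C n \<and> canon x \<in> (\<Inter>m\<in>{..n}. {\<psi>. \<forall>f\<in>F m. \<bar>blinfun_apply \<psi> f - blinfun_apply g f\<bar> < e m})"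
      by blast
    from choice[OF this] obtain c where c0: "\<forall>n. c n \<in> C n \<and> canon (c n) \<in> (\<Inter>m\<in>{..n}. {\<psi>. \<forall>f\<in>F m. \<bar>blinfun_apply \<psi> f - blinfun_apply g f\<bar> < e m})"
      by blast
    have c: "\<And>n. c n \<in> C n"
      "\<And>n. canon (c n) \<in> (\<Inter>m\<in>{..n}. {\<psi>. \<forall>f\<in>F m. \<bar>blinfun_apply \<psi> f - blinfun_apply g f\<bar> < e m})"
      using c0 by blast+
    have "limitin wstar (\<lambda>n. canon (c n)) g sequentially"
    proof (rule conv_lemma[OF nestle bndC _ c(1)])
      show "\<forall>h\<in>(\<Inter>n. wstar_closure (C n)). (\<forall>m. \<forall>f\<in>F m. \<bar>blinfun_apply h f - blinfun_apply g f\<bar> \<le> e m) \<longrightarrow> h = g"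
        using Fe(2) unfolding K_def .
      fix m :: nat
      have "\<forall>n\<ge>m. \<forall>f\<in>F m. \<bar>blinfun_apply f (c n) - blinfun_apply g f\<bar> \<le> e m"
      proof (intro allI impI ballI)
        fix n f assume "m \<le> n" "f \<in> F m"
        then show "\<bar>blinfun_apply f (c n) - blinfun_apply g f\<bar> \<le> e m"
        proof -
          have "canon (c n) \<in> {\<psi>. \<forall>f\<in>F m. \<bar>blinfun_apply \<psi> f - blinfun_apply g f\<bar> < e m}"
            using c(2)[of n] \<open>m \<le> n\<close> by blast
          then have "\<bar>blinfun_apply f (c n) - blinfun_apply g f\<bar> < e m" using \<open>f \<in> F m\<close> by simp
          then show ?thesis by simp
        qed
      qed
      then show "\<exists>N. \<forall>n\<ge>N. \<forall>f\<in>F m. \<bar>blinfun_apply f (c n) - blinfun_apply g f\<bar> \<le> e m" by blast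
    qed
    then show ?thesis using c(1) by blast
  qed
  have part2: "\<exists>r g. strict_mono r \<and> limitin wstar (\<lambda>n. canon (c (r n))) g sequentially"
    if cC: "\<forall>n. c n \<in> C n" for c
  proof -
    obtain p where p: "\<And>N. p \<in> wstar closure_of (canon ` c ` {n\<in>UNIV. N \<le> n})"
      using cluster[of c B UNIV] bndC cC by blast
    have cn: "\<And>n. c n \<in> C n" using cC by blast
    have pK: "p \<in> K" unfolding K_def by (rule cluster_in_K[of C c, OF nestle cn p])
    obtain F e where Fe: "\<forall>m::nat. finite (F m) \<and> e m > (0::real)"
      "\<forall>h\<in>K. (\<forall>m. \<forall>f\<in>F m. \<bar>blinfun_apply h f - blinfun_apply p f\<bar> \<le> e m) \<longrightarrow> h = p"
      using sep_family[OF metr[folded K_def] pK] by blast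
    define W where "W n = (\<Inter>m\<in>{..n::nat}. {\<psi>. \<forall>f\<in>F m. \<bar>blinfun_apply \<psi> f - blinfun_apply p f\<bar> < e m})" for n
    have Wo: "openin wstar (W n)" for n
      unfolding W_def using Fe(1) by (intro openin_INT2 basic_open) auto
    have pW: "p \<in> W n" for n unfolding W_def using Fe(1) by simp
    have exi: "\<exists>i. j \<le> i \<and> canon (c i) \<in> W n" for j n
    proof -
      have "\<exists>y. y \<in> canon ` c ` {i\<in>UNIV. j \<le> i} \<and> y \<in> W n"
        using p[of j] Wo[of n] pW[of n] unfolding in_closure_of by blast
      then show ?thesis by blast
    qed
    define pick where "pick j n = (SOME i. j \<le> i \<and> canon (c i) \<in> W n)" for j n
    have pick: "j \<le> pick j n" "canon (c (pick j n)) \<in> W n" for j n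
      using someI_ex[OF exi[of j n]] unfolding pick_def by auto
    define r where "r = rec_nat (pick 0 0) (\<lambda>n rn. pick (Suc rn) (Suc n))"
    have r0: "r 0 = pick 0 0" and rS: "r (Suc n) = pick (Suc (r n)) (Suc n)" for n
      unfolding r_def by simp_all
    have rW: "canon (c (r n)) \<in> W n" for n
      by (cases n) (simp_all add: r0 rS pick)
    have sm: "strict_mono r"
      unfolding strict_mono_Suc_iff
    proof
      fix n show "r n < r (Suc n)" using pick(1)[of "Suc (r n)" "Suc n"] rS[of n] by simp
    qed
    have s: "c (r n) \<in> C n" for n
      using cC nestle[OF seq_suble[OF sm, of n]] by blast
    have "limitin wstar (\<lambda>n. canon (c (r n))) p sequentially"
    proof (rule conv_lemma[OF nestle bndC _ s])
      show "\<forall>h\<in>(\<Inter>n. wstar_closure (C n)). (\<forall>m. \<forall>f\<in>F m. \<bar>blinfun_apply h f - blinfun_apply p f\<bar> \<le> e m) \<longrightarrow> h = p"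
        using Fe(2) unfolding K_def .
      fix m :: nat
      have "\<forall>n\<ge>m. \<forall>f\<in>F m. \<bar>blinfun_apply f (c (r n)) - blinfun_apply p f\<bar> \<le> e m"
      proof (intro allI impI ballI)
        fix n f assume "m \<le> n" "f \<in> F m"
        then show "\<bar>blinfun_apply f (c (r n)) - blinfun_apply p f\<bar> \<le> e m"
        proof -
          have "canon (c (r n)) \<in> {\<psi>. \<forall>f\<in>F m. \<bar>blinfun_apply \<psi> f - blinfun_apply p f\<bar> < e m}"
            using rW[of n] \<open>m \<le> n\<close> unfolding W_def by blast
          then have "\<bar>blinfun_apply f (c (r n)) - blinfun_apply p f\<bar> < e m" using \<open>f \<in> F m\<close> by simp
          then show ?thesis by simp
        qed
      qed
      then show "\<exists>N. \<forall>n\<ge>N. \<forall>f\<in>F m. \<bar>blinfun_apply f (c (r n)) - blinfun_apply p f\<bar> \<le> e m" by blast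
    qed
    then show ?thesis using sm by blast
  qed
  show ?thesis using part1 part2 unfolding K_def by blast
qed

end
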